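(* Let $K$ be a valued field and $d\ge 1$. Then the family $\operatorname{Conv}_{K^d}$ of convex subsets of $K^d$ has breadth exactly $d$: whenever $C_1,\dots,C_n\subseteq K^d$ are convex with $\bigcap_{i=1}^nC_i\ne\emptyset$, there is $S\subseteq\{1,\dots,n\}$ with $|S|\le d$ and $\bigcap_{i\in S}C_i=\bigcap_{i=1}^nC_i$; and $d$ is the least number with this property.
   Context: $K$ is a field with valuation $\nu$ and valuation ring $\mathcal{O}=\{x:\nu(x)\ge0\}$. A set $X\subseteq K^d$ is convex if it is closed under combinations $\sum_{i=1}^n\alpha_ix_i$ with $x_i\in X$, $\alpha_i\in\mathcal{O}$, $\sum\alpha_i=1$. A family $\mathcal{F}$ of subsets of a set has breadth $d$ if every nonempty intersection of finitely many members of $\mathcal{F}$ equals the intersection of at most $d$ of them, and $d$ is minimal with this property. *)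

theory Defs
  imports "HOL-Analysis.Analysis"
begin

text \<open>The value of 0 is +infinity; this is encoded by only constraining v on nonzero
  elements and treating 0 separately in the valuation ring.\<close>
definition valuation :: "('k::field \<Rightarrow> 'g::linordered_ab_group_add) \<Rightarrow> bool" where
  "valuation v \<longleftrightarrow>
     (\<forall>x y. x \<noteq> 0 \<and> y \<noteq> 0 \<longrightarrow> v (x * y) = v x + v y) \<and>
     (\<forall>x y. x \<noteq> 0 \<and> y \<noteq> 0 \<and> x + y \<noteq> 0 \<longrightarrow> min (v x) (v y) \<le> v (x + y))"

definition val_ring :: "('k::field \<Rightarrow> 'g::linordered_ab_group_add) \<Rightarrow> 'k set" where
  "val_ring v = {x. x = 0 \<or> 0 \<le> v x}"

definition val_convex :: "('k::field \<Rightarrow> 'g::linordered_ab_group_add) \<Rightarrow> ('k ^ 'n) set \<Rightarrow> bool" where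
  "val_convex v X \<longleftrightarrow>
     (\<forall>(m::nat) (\<alpha>::nat \<Rightarrow> 'k) (x::nat \<Rightarrow> 'k ^ 'n).
        (\<forall>i<m. x i \<in> X \<and> \<alpha> i \<in> val_ring v) \<and> (\<Sum>i<m. \<alpha> i) = 1
        \<longrightarrow> (\<Sum>i<m. \<alpha> i *s x i) \<in> X)"

definition breadth_le :: "'a set set \<Rightarrow> nat \<Rightarrow> bool" where
  "breadth_le F d \<longleftrightarrow>
     (\<forall>(n::nat) (C::nat \<Rightarrow> 'a set). (\<forall>i<n. C i \<in> F) \<and> (\<Inter>i<n. C i) \<noteq> {} \<longrightarrow>
        (\<exists>S\<subseteq>{..<n}. card S \<le> d \<and> (\<Inter>i\<in>S. C i) = (\<Inter>i<n. C i)))"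

definition has_breadth :: "'a set set \<Rightarrow> nat \<Rightarrow> bool" where
  "has_breadth F d \<longleftrightarrow> breadth_le F d \<and> (\<forall>e<d. \<not> breadth_le F e)"

end

theory Submission
  imports Defs
begin

lemma val_mult:
  assumes "valuation v" "x \<noteq> 0" "y \<noteq> 0" shows "v (x*y) = v x + v y"
  using assms unfolding valuation_def by blast

lemma val_one:
  assumes "valuation v" shows "v 1 = 0"
proof -
  have "v (1*1) = v 1 + v 1" using val_mult[OF assms, of 1 1] by simp
  thus ?thesis by simp
qed

lemma val_minus_one:
  assumes "valuation v" shows "v (-1) = 0"
proof -
  have "v ((-1)*(-1)) = v (-1) + v (-1)" using val_mult[OF assms, of "-1" "-1"] by simp
  hence "v (-1) + v (-1) = 0" using val_one[OF assms] by simp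
  thus ?thesis
  proof (cases "v (-1)" "0::'b" rule: linorder_cases)
    case less thus ?thesis using \<open>v (-1) + v (-1) = 0\<close> add_neg_neg[OF less less] by simp
  next
    case greater thus ?thesis using \<open>v (-1) + v (-1) = 0\<close> add_pos_pos[OF greater greater] by simp
  qed
qed

lemma val_uminus:
  assumes "valuation v" "x \<noteq> 0" shows "v (-x) = v x"
proof -
  have "v ((-1)*x) = v (-1) + v x" using val_mult[OF assms(1), of "-1" x] assms(2) by simp
  thus ?thesis using val_minus_one[OF assms(1)] by simp
qed

lemma val_ring_zero: "0 \<in> val_ring v" by (simp add: val_ring_def)

lemma val_ring_one: "valuation v \<Longrightarrow> 1 \<in> val_ring v"
  by (simp add: val_ring_def val_one)

lemma val_ring_minus_one: "valuation v \<Longrightarrow> -1 \<in> val_ring v"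
  by (simp add: val_ring_def val_minus_one)

lemma val_ring_uminus: "valuation v \<Longrightarrow> a \<in> val_ring v \<Longrightarrow> -a \<in> val_ring v"
  by (cases "a = 0") (auto simp: val_ring_def val_uminus)

lemma val_ring_add:
  assumes "valuation v" "a \<in> val_ring v" "b \<in> val_ring v" shows "a + b \<in> val_ring v"
proof (cases "a = 0 \<or> b = 0 \<or> a + b = 0")
  case True thus ?thesis using assms by (auto simp: val_ring_def)
next
  case False
  hence "min (v a) (v b) \<le> v (a+b)" using assms(1) unfolding valuation_def by auto
  moreover have "0 \<le> v a" "0 \<le> v b" using assms False by (auto simp: val_ring_def)
  ultimately have "0 \<le> v (a+b)" by (metis min.bounded_iff order_trans)
  thus ?thesis by (auto simp: val_ring_def)
qed

lemma val_ring_one_minus: "valuation v \<Longrightarrow> a \<in> val_ring v \<Longrightarrow> 1 - a \<in> val_ring v"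
  using val_ring_add[of v 1 "-a"] val_ring_one val_ring_uminus by fastforce

lemma val_ring_div:
  assumes "valuation v" "c \<noteq> 0" "v c \<le> v b" shows "b / c \<in> val_ring v"
proof (cases "b = 0")
  case True thus ?thesis by (simp add: val_ring_def)
next
  case False
  have "v ((b/c) * c) = v (b/c) + v c" using assms False val_mult[OF assms(1), of "b/c" c] by simp
  hence "v b = v (b/c) + v c" using assms by simp
  thus ?thesis using assms by (simp add: val_ring_def)
qed

lemma convex2:
  assumes "val_convex v X" "valuation v" "p \<in> X" "q \<in> X" "a \<in> val_ring v"
  shows "(1 - a) *s p + a *s q \<in> X"
proof -
  have "(\<Sum>i<Suc (Suc 0). (\<lambda>i. if i = 0 then 1 - a else a) i *s (\<lambda>i. if i = 0 then p else q) i) \<in> X"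
    apply (rule assms(1)[unfolded val_convex_def, rule_format])
    using assms val_ring_one_minus by (auto simp: lessThan_Suc less_Suc_eq)
  thus ?thesis by (simp add: lessThan_Suc add.commute)
qed

lemma convex3:
  assumes "val_convex v X" "valuation v" "p \<in> X" "q \<in> X" "r \<in> X"
  shows "q + r - p \<in> X"
proof -
  let ?a = "\<lambda>i::nat. if i = 0 then -1 else (1::'a)"
  let ?x = "\<lambda>i::nat. if i = 0 then p else if i = 1 then q else r"
  have "(\<Sum>i<Suc (Suc (Suc 0)). ?a i *s ?x i) \<in> X"
    apply (rule assms(1)[unfolded val_convex_def, rule_format])
    using assms val_ring_one val_ring_minus_one by (auto simp: lessThan_Suc less_Suc_eq)
  thus ?thesis by (simp add: lessThan_Suc algebra_simps)
qed

lemma module_closed: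
  assumes "val_convex v X" "valuation v" "p \<in> X" "finite T"
    "\<forall>u\<in>T. p + u \<in> X" "\<forall>u\<in>T. a u \<in> val_ring v"
  shows "p + (\<Sum>u\<in>T. a u *s u) \<in> X"
  using assms(4-6)
proof (induction T rule: finite_induct)
  case empty thus ?case using assms(3) by simp
next
  case (insert u T)
  have q: "p + (\<Sum>u\<in>T. a u *s u) \<in> X" using insert by auto
  have "(1 - a u) *s p + a u *s (p + u) \<in> X"
    using convex2[OF assms(1,2,3), of "p + u" "a u"] insert by auto
  hence r: "p + a u *s u \<in> X" by (simp add: algebra_simps)
  have "(p + a u *s u) + (p + (\<Sum>u\<in>T. a u *s u)) - p \<in> X"
    using convex3[OF assms(1,2,3) r q] .
  thus ?case using insert by (simp add: algebra_simps)
qed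

lemma redundant:
  fixes C :: "'b \<Rightarrow> ('k::field ^'n) set" and v :: "'k \<Rightarrow> 'g::linordered_ab_group_add"
  assumes val: "valuation v" and fin: "finite J" and cardJ: "card J > CARD('n)"
    and conv: "\<forall>j\<in>J. val_convex v (C j)" and pin: "\<forall>j\<in>J. p \<in> C j"
  shows "\<exists>j\<in>J. (\<Inter>i\<in>J-{j}. C i) \<subseteq> C j"
proof (rule ccontr)
  assume "\<not> ?thesis"
  then have "\<forall>j\<in>J. \<exists>x. x \<in> (\<Inter>i\<in>J-{j}. C i) \<and> x \<notin> C j" by blast
  then obtain x where x: "\<And>j. j\<in>J \<Longrightarrow> x j \<in> (\<Inter>i\<in>J-{j}. C i) \<and> x j \<notin> C j" by metis
  define y where "y j = x j - p" for j
  have inj: "inj_on y J"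
  proof (rule inj_onI)
    fix i j assume ij: "i\<in>J" "j\<in>J" "y i = y j"
    hence xe: "x i = x j" by (simp add: y_def)
    show "i = j"
    proof (rule ccontr)
      assume "i \<noteq> j"
      hence "x i \<in> C j" using x[OF ij(1)] ij(2) by auto
      thus False using x[OF ij(2)] xe by simp
    qed
  qed
  have "\<not> vec.independent (y ` J)"
  proof
    assume ind: "vec.independent (y ` J)"
    have "card (y ` J) \<le> vec.dim (y ` J)" using vec.independent_bound_general[OF ind] by simp
    also have "\<dots> \<le> vec.dim (UNIV :: ('k^'n) set)" by (rule vec.dim_subset) simp
    also have "\<dots> = CARD('n)" by (rule vec_dim_card)
    finally show False using card_image[OF inj] cardJ by simp
  qed
  then obtain c where c0: "(\<Sum>w\<in>y`J. c w *s w) = 0" and cnz: "\<exists>w\<in>y`J. c w \<noteq> 0"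
    using vec.independent_explicit fin by blast
  define T where "T = y ` J"
  define N where "N = {w\<in>T. c w \<noteq> 0}"
  have finT: "finite T" using fin T_def by simp
  have finN: "finite N" "N \<noteq> {}" using finT cnz by (auto simp: N_def T_def)
  have "Min ((\<lambda>w. v (c w)) ` N) \<in> (\<lambda>w. v (c w)) ` N" using finN by (intro Min_in) auto
  then obtain w where wN: "w \<in> N" and wmin: "v (c w) = Min ((\<lambda>w. v (c w)) ` N)" by auto
  have wle: "\<And>u. u \<in> N \<Longrightarrow> v (c w) \<le> v (c u)" using wmin finN by simp
  have cw: "c w \<noteq> 0" "w \<in> T" using wN by (auto simp: N_def)
  then obtain j where j: "j \<in> J" "w = y j" by (auto simp: T_def)
  define a where "a u = - (c u / c w)" for u
  have "c w *s w + (\<Sum>u\<in>T-{w}. c u *s u) = 0"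
    using c0 sum.remove[OF finT cw(2), of "\<lambda>u. c u *s u"] by (simp add: T_def)
  hence "c w *s w = - (\<Sum>u\<in>T-{w}. c u *s u)" by (simp add: eq_neg_iff_add_eq_0)
  hence "inverse (c w) *s (c w *s w) = inverse (c w) *s (- (\<Sum>u\<in>T-{w}. c u *s u))" by simp
  hence wsum: "w = (\<Sum>u\<in>T-{w}. a u *s u)"
    using cw(1) by (simp add: vector_smult_assoc vec.scale_sum_right a_def divide_inverse
        mult.commute vec.scale_minus_right flip: sum_negf)
  have aO: "\<forall>u\<in>T-{w}. a u \<in> val_ring v"
  proof
    fix u assume u: "u \<in> T - {w}"
    show "a u \<in> val_ring v"
    proof (cases "c u = 0")
      case True thus ?thesis by (simp add: a_def val_ring_def)
    next
      case False
      hence "u \<in> N" using u by (auto simp: N_def)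
      hence "c u / c w \<in> val_ring v" using wle val_ring_div[OF val cw(1)] by blast
      thus ?thesis unfolding a_def using val_ring_uminus[OF val] by blast
    qed
  qed
  have inC: "\<forall>u\<in>T-{w}. p + u \<in> C j"
  proof
    fix u assume u: "u \<in> T - {w}"
    then obtain i where i: "i \<in> J" "u = y i" by (auto simp: T_def)
    hence "i \<noteq> j" using u j by auto
    hence "x i \<in> C j" using x[OF i(1)] j(1) by auto
    thus "p + u \<in> C j" using i by (simp add: y_def)
  qed
  have "p + (\<Sum>u\<in>T-{w}. a u *s u) \<in> C j"
    using module_closed[of v "C j" p "T-{w}" a] conv pin j(1) val finT aO inC by auto
  hence "x j \<in> C j" using wsum j by (simp add: y_def)
  thus False using x[OF j(1)] by simp
qed


lemma upper:
  fixes C :: "nat \<Rightarrow> ('k::field ^'n) set" and v :: "'k \<Rightarrow> 'g::linordered_ab_group_add"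
  assumes val: "valuation v"
  shows "finite I \<Longrightarrow> (\<forall>i\<in>I. val_convex v (C i)) \<Longrightarrow> (\<Inter>i\<in>I. C i) \<noteq> {} \<Longrightarrow>
    \<exists>S\<subseteq>I. card S \<le> CARD('n) \<and> (\<Inter>i\<in>S. C i) = (\<Inter>i\<in>I. C i)"
proof (induction "card I" arbitrary: I rule: less_induct)
  case less
  show ?case
  proof (cases "card I \<le> CARD('n)")
    case True thus ?thesis by (intro exI[of _ I]) auto
  next
    case False
    then obtain J where J: "J \<subseteq> I" "card J = Suc CARD('n)" "finite J"
      using obtain_subset_with_card_n[of "Suc CARD('n)" I] by force
    obtain p where p: "p \<in> (\<Inter>i\<in>I. C i)" using less.prems(3) by auto
    have "\<exists>j\<in>J. (\<Inter>i\<in>J-{j}. C i) \<subseteq> C j"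
      by (rule redundant[OF val J(3)]) (use J less.prems p in auto)
    then obtain j where j: "j \<in> J" "(\<Inter>i\<in>J-{j}. C i) \<subseteq> C j" by blast
    have eq: "(\<Inter>i\<in>I-{j}. C i) = (\<Inter>i\<in>I. C i)"
    proof
      show "(\<Inter>i\<in>I-{j}. C i) \<subseteq> (\<Inter>i\<in>I. C i)"
      proof
        fix z assume z: "z \<in> (\<Inter>i\<in>I-{j}. C i)"
        hence "z \<in> (\<Inter>i\<in>J-{j}. C i)" using J(1) by auto
        hence "z \<in> C j" using j by auto
        thus "z \<in> (\<Inter>i\<in>I. C i)" using z by auto
      qed
    qed auto
    have "card (I - {j}) < card I" using j J less.prems(1)
      by (meson card_Diff1_less subsetD)
    obtain S where "S \<subseteq> I - {j}" "card S \<le> CARD('n)" "(\<Inter>i\<in>S. C i) = (\<Inter>i\<in>I-{j}. C i)"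
    proof -
      have f1: "finite (I - {j})" and f2: "\<forall>i\<in>I-{j}. val_convex v (C i)"
        and f3: "(\<Inter>i\<in>I-{j}. C i) \<noteq> {}"
        using less.prems eq by auto
      show ?thesis using less.hyps[OF \<open>card (I - {j}) < card I\<close> f1 f2 f3] by (elim exE conjE) (rule that)
    qed
    thus ?thesis using eq by (intro exI[of _ S]) auto
  qed
qed

lemma lower:
  fixes v :: "'k::field \<Rightarrow> 'g::linordered_ab_group_add"
  assumes "e < CARD('n)"
  shows "\<not> breadth_le {X :: ('k ^ 'n) set. val_convex v X} e"
proof
  assume b: "breadth_le {X :: ('k ^ 'n) set. val_convex v X} e"
  obtain h where h: "bij_betw h {0..<CARD('n)} (UNIV::'n set)"
    using ex_bij_betw_nat_finite[of "UNIV::'n set"] by auto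
  define C where "C i = {x::'k^'n. x $ h i = 0}" for i
  have conv: "val_convex v (C i)" for i
  proof (unfold val_convex_def, intro allI impI)
    fix m and \<alpha> :: "nat \<Rightarrow> 'k" and x :: "nat \<Rightarrow> 'k^'n"
    assume H: "(\<forall>j<m. x j \<in> C i \<and> \<alpha> j \<in> val_ring v) \<and> sum \<alpha> {..<m} = 1"
    have "\<forall>j\<in>{..<m}. \<alpha> j * (x j $ h i) = 0" using H by (simp add: C_def)
    hence "(\<Sum>j<m. \<alpha> j * (x j $ h i)) = 0" by (rule sum.neutral)
    thus "(\<Sum>j<m. \<alpha> j *s x j) \<in> C i" by (simp add: C_def)
  qed
  have "(0::'k^'n) \<in> (\<Inter>i<CARD('n). C i)" by (simp add: C_def)
  then obtain S where S: "S \<subseteq> {..<CARD('n)}" "card S \<le> e" "(\<Inter>i\<in>S. C i) = (\<Inter>i<CARD('n). C i)"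
  proof -
    have "(\<forall>i<CARD('n). C i \<in> {X. val_convex v X}) \<and> (\<Inter>i<CARD('n). C i) \<noteq> {}"
      using conv \<open>0 \<in> _\<close> by auto
    hence "\<exists>S\<subseteq>{..<CARD('n)}. card S \<le> e \<and> (\<Inter>i\<in>S. C i) = (\<Inter>i<CARD('n). C i)"
      using b unfolding breadth_le_def by (elim allE[of _ "CARD('n)"] allE[of _ C]) (erule mp)
    thus ?thesis using that by blast
  qed
  have "S \<noteq> {..<CARD('n)}" using S(2) assms by auto
  then obtain k where k: "k < CARD('n)" "k \<notin> S" using S(1) by auto
  define z where "z = (\<chi> t. if t = h k then (1::'k) else 0)"
  have "z \<in> (\<Inter>i\<in>S. C i)"
  proof
    fix i assume i: "i \<in> S"
    have inj: "inj_on h {0..<CARD('n)}" using h by (simp add: bij_betw_def)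
    have "i \<in> {0..<CARD('n)}" "k \<in> {0..<CARD('n)}" "i \<noteq> k" using i S(1) k by auto
    hence "h i \<noteq> h k" using inj_onD[OF inj] by blast
    thus "z \<in> C i" by (simp add: z_def C_def)
  qed
  moreover have "z \<notin> C k" by (simp add: z_def C_def)
  ultimately show False
  proof -
    assume z1: "z \<in> (\<Inter>i\<in>S. C i)" and z2: "z \<notin> C k"
    have "z \<in> (\<Inter>i<CARD('n). C i)" using z1 S(3) by simp
    hence "z \<in> C k" using k(1) by blast
    thus False using z2 by simp
  qed
qed

theorem theorem4p3:
  fixes v :: "'k::field \<Rightarrow> 'g::linordered_ab_group_add"
  assumes "valuation v"
  shows "has_breadth {X :: ('k ^ 'n) set. val_convex v X} CARD('n)"
  unfolding has_breadth_def
proof (intro conjI allI impI)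
  show "breadth_le {X :: ('k ^ 'n) set. val_convex v X} CARD('n)"
    unfolding breadth_le_def
  proof (intro allI impI)
    fix n and C :: "nat \<Rightarrow> ('k^'n) set"
    assume "(\<forall>i<n. C i \<in> {X. val_convex v X}) \<and> (\<Inter>i<n. C i) \<noteq> {}"
    thus "\<exists>S\<subseteq>{..<n}. card S \<le> CARD('n) \<and> (\<Inter>i\<in>S. C i) = (\<Inter>i<n. C i)"
      using upper[OF assms, of "{..<n}" C] by auto
  qed
next
  fix e assume "e < CARD('n)"
  thus "\<not> breadth_le {X :: ('k ^ 'n) set. val_convex v X} e" by (rule lower)
qed

end
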